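(* Let $(\Omega,\preceq)$ be a pre-ordered set, let $n_1\ge 0$, and let $(t,c)$ and $(t',c')$ be two segments over $\Omega$ with domain $[n_1]$. If there exists a morphism $(t,c)\to(t',c')$ in $\mathbf{Seg}(\Omega\,|\,n_1)$, then it is the only morphism from $(t,c)$ to $(t',c')$ in $\mathbf{Seg}(\Omega)$.
   Context: For $n\ge 1$, $[n]=\{1,\dots,n\}$ with its usual order, and $[0]=\emptyset$. A segment over a pre-ordered set $(\Omega,\preceq)$ is a pair $(t,c)$ where $t:[n_1]\to[n_0]$ is an order-preserving surjection and $c:[n_0]\to\Omega$ is a function; $[n_1]$ is its domain. A morphism of segments $(t,c)\to(t',c')$ (with $t':[n_1']\to[n_0']$, $c':[n_0']\to\Omega$) is a pair $(f_1,f_0)$ with $f_1:[n_1]\to[n_1']$ an order-preserving injection and $f_0:[n_0]\to[n_0']$ order-preserving, such that $t'\circ f_1=f_0\circ t$ and $c'(f_0(i))\preceq c(i)$ for all $i\in[n_0]$; composition is componentwise. This gives the category $\mathbf{Seg}(\Omega)$. The subcategory $\mathbf{Seg}(\Omega\,|\,n_1)$ has as objects the segments with domain $[n_1]$ and as morphisms those morphisms $(f_1,f_0)$ with $f_1=\mathrm{id}_{[n_1]}$. *)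

theory Defs
  imports Main
begin

text \<open>The ordinal [n] = {1..n} (so [0] is empty). A segment over a pre-ordered set
 (Omega, le) is given by n1, n0, an order-preserving surjection t : [n1] -> [n0]
 and a function c : [n0] -> Omega. Functions are HOL functions; only their values on
 the relevant finite domains matter.\<close>

definition is_segment :: "nat \<Rightarrow> nat \<Rightarrow> (nat \<Rightarrow> nat) \<Rightarrow> bool" where
  "is_segment n1 n0 t \<longleftrightarrow>
     (\<forall>i\<in>{1..n1}. \<forall>j\<in>{1..n1}. i \<le> j \<longrightarrow> t i \<le> t j) \<and>
     t ` {1..n1} = {1..n0}"

definition seg_mor ::
  "('a \<Rightarrow> 'a \<Rightarrow> bool) \<Rightarrow>
   nat \<Rightarrow> nat \<Rightarrow> (nat \<Rightarrow> nat) \<Rightarrow> (nat \<Rightarrow> 'a) \<Rightarrow>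
   nat \<Rightarrow> nat \<Rightarrow> (nat \<Rightarrow> nat) \<Rightarrow> (nat \<Rightarrow> 'a) \<Rightarrow>
   (nat \<Rightarrow> nat) \<Rightarrow> (nat \<Rightarrow> nat) \<Rightarrow> bool" where
  "seg_mor le n1 n0 t c n1' n0' t' c' f1 f0 \<longleftrightarrow>
     f1 ` {1..n1} \<subseteq> {1..n1'} \<and>
     (\<forall>i\<in>{1..n1}. \<forall>j\<in>{1..n1}. i \<le> j \<longrightarrow> f1 i \<le> f1 j) \<and>
     inj_on f1 {1..n1} \<and>
     f0 ` {1..n0} \<subseteq> {1..n0'} \<and>
     (\<forall>i\<in>{1..n0}. \<forall>j\<in>{1..n0}. i \<le> j \<longrightarrow> f0 i \<le> f0 j) \<and>
     (\<forall>i\<in>{1..n1}. t' (f1 i) = f0 (t i)) \<and>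
     (\<forall>i\<in>{1..n0}. le (c' (f0 i)) (c i))"

definition seg_mor_fixed ::
  "('a \<Rightarrow> 'a \<Rightarrow> bool) \<Rightarrow> nat \<Rightarrow>
   nat \<Rightarrow> (nat \<Rightarrow> nat) \<Rightarrow> (nat \<Rightarrow> 'a) \<Rightarrow>
   nat \<Rightarrow> (nat \<Rightarrow> nat) \<Rightarrow> (nat \<Rightarrow> 'a) \<Rightarrow>
   (nat \<Rightarrow> nat) \<Rightarrow> (nat \<Rightarrow> nat) \<Rightarrow> bool" where
  "seg_mor_fixed le n1 n0 t c n0' t' c' f1 f0 \<longleftrightarrow>
     seg_mor le n1 n0 t c n1 n0' t' c' f1 f0 \<and> (\<forall>i\<in>{1..n1}. f1 i = i)"

end

theory Submission
  imports Defs
begin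

lemma mono_inj_id:
  fixes g :: "nat \<Rightarrow> nat"
  assumes img: "g ` {1..n} \<subseteq> {1..n}"
    and mono: "\<forall>i\<in>{1..n}. \<forall>j\<in>{1..n}. i \<le> j \<longrightarrow> g i \<le> g j"
    and inj: "inj_on g {1..n}"
  shows "\<forall>i\<in>{1..n}. g i = i"
proof -
  have sm: "g i < g j" if "i \<in> {1..n}" "j \<in> {1..n}" "i < j" for i j
  proof -
    have "g i \<le> g j" using mono that by auto
    moreover have "g i \<noteq> g j" using inj that by (metis inj_on_def less_irrefl)
    ultimately show ?thesis by simp
  qed
  have lo: "i \<le> g i" if "i \<in> {1..n}" for i
    using that
  proof (induction i)
    case 0 then show ?case by simp
  next
    case (Suc k)
    show ?case
    proof (cases "k = 0")
      case True then have "Suc k \<in> {1..n}" using Suc.prems by auto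
      then have "g (Suc k) \<in> {1..n}" using img by blast
      then show ?thesis using True by simp
    next
      case False
      then have "k \<in> {1..n}" using Suc.prems by auto
      then have "k \<le> g k" "g k < g (Suc k)" using Suc sm[of k "Suc k"] by auto
      then show ?thesis by simp
    qed
  qed
  have hi: "g (n - k) \<le> n - k" if "n - k \<in> {1..n}" for k
    using that
  proof (induction k)
    case 0 then have "n \<in> {1..n}" by simp
    then have "g n \<in> {1..n}" using img by blast
    then show ?case by simp
  next
    case (Suc k)
    then have a: "n - k \<in> {1..n}" "n - Suc k < n - k" by auto
    then have "g (n - k) \<le> n - k" "g (n - Suc k) < g (n - k)"
      using Suc sm[of "n - Suc k" "n - k"] by auto
    then show ?case using a by simp
  qed
  show ?thesis
  proof
    fix i assume i: "i \<in> {1..n}"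
    have "n - (n - i) = i" using i by auto
    then have "g i \<le> i" using hi[of "n - i"] i by auto
    moreover have "i \<le> g i" using lo i by blast
    ultimately show "g i = i" by simp
  qed
qed

theorem mainTheorem1:
  fixes le :: "'a \<Rightarrow> 'a \<Rightarrow> bool"
    and n1 n0 n0' :: nat
    and t t' :: "nat \<Rightarrow> nat"
    and c c' :: "nat \<Rightarrow> 'a"
    and f1 f0 :: "nat \<Rightarrow> nat"
  assumes "reflp le" and "transp le"
    and "is_segment n1 n0 t"
    and "is_segment n1 n0' t'"
    and "seg_mor_fixed le n1 n0 t c n0' t' c' f1 f0"
  shows "\<forall>g1 g0. seg_mor le n1 n0 t c n1 n0' t' c' g1 g0 \<longrightarrow>
           (\<forall>i\<in>{1..n1}. g1 i = f1 i) \<and> (\<forall>i\<in>{1..n0}. g0 i = f0 i)"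
proof (intro allI impI)
  fix g1 g0
  assume g: "seg_mor le n1 n0 t c n1 n0' t' c' g1 g0"
  have f1: "\<forall>i\<in>{1..n1}. f1 i = i" and fm: "\<forall>i\<in>{1..n1}. t' (f1 i) = f0 (t i)"
    using assms(5) unfolding seg_mor_fixed_def seg_mor_def by auto
  have g1: "\<forall>i\<in>{1..n1}. g1 i = i"
    using g mono_inj_id[of g1 n1] unfolding seg_mor_def by auto
  have gm: "\<forall>i\<in>{1..n1}. t' (g1 i) = g0 (t i)" using g unfolding seg_mor_def by auto
  have surj: "t ` {1..n1} = {1..n0}" using assms(3) unfolding is_segment_def by auto
  show "(\<forall>i\<in>{1..n1}. g1 i = f1 i) \<and> (\<forall>i\<in>{1..n0}. g0 i = f0 i)"
  proof
    show "\<forall>i\<in>{1..n1}. g1 i = f1 i" using f1 g1 by auto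
    show "\<forall>i\<in>{1..n0}. g0 i = f0 i"
    proof
      fix j assume "j \<in> {1..n0}"
      then obtain i where i: "i \<in> {1..n1}" "j = t i" using surj by (metis imageE)
      show "g0 j = f0 j" using i f1 g1 fm gm by metis
    qed
  qed
qed

end
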